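(* Let $\eta>0$ and let $\mathcal{H}$ be the Paley-Wiener space on $\mathbb{R}^d$ with parameter $\eta$, i.e. the space of functions $f\in\mathcal{L}^2(\mathbb{R}^d)$ whose Fourier transform is supported in $[-\eta,\eta]^d$, equipped with the $\mathcal{L}^2$ norm, so that $\|f\|_{\mathcal{H}}^2=\int_{\mathbb{R}^d} f^2(s)\,\mathrm{d}s$. Let $f_*\in\mathcal{H}$. Let $x_1,\dots,x_{n_0}$ ($n_0\ge 1$) be i.i.d. $\mathbb{R}^d$-valued random vectors with an absolutely continuous distribution whose density $h_*$ is known and satisfies $h_*(x)>0$ for all $x\in\mathbb{R}^d$, and suppose there is a constant $\varrho>0$ with $f_*^2(x)\le \varrho\, h_*(x)$ for all $x\in\mathbb{R}^d$. Let $\beta\in(0,1)$ and let $\mathcal{Z}\subseteq\mathbb{R}^{n_0}$ be a random (bounded) confidence ellipsoid satisfying $$\mathbb{P}\big((f_*(x_1),\dots,f_*(x_{n_0}))^{\mathrm{T}}\in\mathcal{Z}\big)\ge 1-\beta,$$ and let $\xi^*$ be the optimal value of the problem of maximizing $\frac{1}{n_0}\sum_{k=1}^{n_0} z_k^2/h_*(x_k)$ subject to $z=(z_1,\dots,z_{n_0})^{\mathrm{T}}\in\mathcal{Z}$. Let $U$ be a random variable uniformly distributed on $(0,1)$ and independent of $x_1,\dots,x_{n_0}$. For $\alpha\in(0,1)$ define $$\phi(\sigma,\alpha,n,u)\doteq \sigma\sqrt{\frac{2\ln(1/\alpha)}{n}}+\sigma\frac{\ln(u)}{\sqrt{2n\ln(1/\alpha)}},$$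 $$\tau_{\mathtt{u}}\doteq \xi^*+\phi(\varrho/2,\alpha,n_0,U),\qquad \tau_0\doteq \xi^*+\varrho\sqrt{\ln(1/\alpha)/(2n_0)}.$$ Then $\mathbb{P}\big(\|f_*\|_{\mathcal{H}}^2\le \tau_{\mathtt{u}}\big)\ge 1-\alpha-\beta$, and moreover $\mathbb{P}(\tau_{\mathtt{u}}<\tau_0)=1$.
   Context: $\tau_0$ is the earlier (non-randomized Hoeffding-based) upper bound on the squared kernel norm $\|f_*\|_{\mathcal{H}}^2$; $\tau_{\mathtt{u}}$ is the uniformly-randomized version. The ellipsoid $\mathcal{Z}$ may be constructed from noisy observations $y_k=f_*(x_k)+\varepsilon_k$ (e.g. by a kernel-based method); only its stated coverage property is used. *)

theory Defs
  imports "HOL-Probability.Probability"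
begin

text \<open>Paley-Wiener space on the euclidean space 'a with parameter eta:
  real-valued square-integrable functions whose Fourier transform is supported in the
  cube [-eta,eta]^d, i.e. f is the inverse Fourier transform of a square-integrable
  function g supported on the cube (taken in its continuous representative).
  Fourier convention: exponent i<w,x>; constants are absorbed into g.\<close>

definition pw_cube :: "real \<Rightarrow> 'a::euclidean_space set" where
  "pw_cube \<eta> = cbox (- (\<eta> *\<^sub>R One)) (\<eta> *\<^sub>R One)"

definition paley_wiener :: "real \<Rightarrow> ('a::euclidean_space \<Rightarrow> real) \<Rightarrow> bool" where
  "paley_wiener \<eta> f \<longleftrightarrow>
     f \<in> borel_measurable lborel \<and> integrable lborel (\<lambda>s. (f s)^2) \<and>
     (\<exists>g :: 'a \<Rightarrow> complex. g \<in> borel_measurable lborel \<and>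
        set_integrable lborel (pw_cube \<eta>) (\<lambda>w. (cmod (g w))^2) \<and>
        (\<forall>x. complex_of_real (f x) =
              (LINT w : pw_cube \<eta> | lborel. g w * cis (w \<bullet> x))))"

definition pw_norm_sq :: "('a::euclidean_space \<Rightarrow> real) \<Rightarrow> real" where
  "pw_norm_sq f = (\<integral>s. (f s)^2 \<partial>lborel)"

definition is_ellipsoid :: "(real^'n::finite) set \<Rightarrow> bool" where
  "is_ellipsoid Z \<longleftrightarrow> (\<exists>c (A :: real^'n^'n). transpose A = A \<and>
      (\<forall>v. v \<noteq> 0 \<longrightarrow> v \<bullet> (A *v v) > 0) \<and>
      Z = {z. (z - c) \<bullet> (A *v (z - c)) \<le> 1})"

definition xi_star :: "(real^'n::finite) set \<Rightarrow> ('a \<Rightarrow> real) \<Rightarrow> ('n \<Rightarrow> 'a) \<Rightarrow> real" where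
  "xi_star Z h x = Sup ((\<lambda>z. (1 / real CARD('n)) * (\<Sum>k\<in>UNIV. (z $ k)^2 / h (x k))) ` Z)"

definition phi :: "real \<Rightarrow> real \<Rightarrow> real \<Rightarrow> real \<Rightarrow> real" where
  "phi \<sigma> \<alpha> n u = \<sigma> * sqrt (2 * ln (1 / \<alpha>) / n) + \<sigma> * ln u / sqrt (2 * n * ln (1 / \<alpha>))"

definition tau_u :: "real \<Rightarrow> real \<Rightarrow> real \<Rightarrow> real \<Rightarrow> real \<Rightarrow> real" where
  "tau_u \<xi> \<rho> \<alpha> n u = \<xi> + phi (\<rho> / 2) \<alpha> n u"

definition tau_0 :: "real \<Rightarrow> real \<Rightarrow> real \<Rightarrow> real \<Rightarrow> real" where
  "tau_0 \<xi> \<rho> \<alpha> n = \<xi> + \<rho> * sqrt (ln (1 / \<alpha>) / (2 * n))"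

end

theory Submission
  imports Defs
begin

lemma ellipsoid_bounded:
  fixes Z :: "(real^'n::finite) set"
  assumes "is_ellipsoid Z" shows "bounded Z"
proof -
  obtain c and A :: "real^'n^'n" where pd: "\<And>v. v \<noteq> 0 \<Longrightarrow> v \<bullet> (A *v v) > 0"
    and Zeq: "Z = {z. (z - c) \<bullet> (A *v (z - c)) \<le> 1}"
    using assms unfolding is_ellipsoid_def by blast
  define q where "q v = v \<bullet> (A *v v)" for v :: "real^'n"
  have cont: "continuous_on (sphere 0 1) q"
    unfolding q_def by (intro continuous_intros)
  obtain v0 where v0: "v0 \<in> sphere 0 1" and min: "\<And>y. y \<in> sphere 0 1 \<Longrightarrow> q v0 \<le> q y"
    using continuous_attains_inf[OF compact_sphere _ cont] by fastforce
  define m where "m = q v0"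
  have "v0 \<noteq> 0" using v0 by auto
  then have m: "m > 0" using pd unfolding m_def q_def by blast
  have hom: "q (r *\<^sub>R v) = r^2 * q v" for r v
    unfolding q_def by (simp add: matrix_vector_mult_scaleR power2_eq_square)
  have low: "norm v ^ 2 * m \<le> q v" for v
  proof (cases "v = 0")
    case True then show ?thesis by (simp add: q_def)
  next
    case False
    have "q v = q (norm v *\<^sub>R ((1 / norm v) *\<^sub>R v))" using False by simp
    also have "\<dots> = norm v ^ 2 * q ((1 / norm v) *\<^sub>R v)" by (rule hom)
    finally have e: "q v = norm v ^ 2 * q ((1 / norm v) *\<^sub>R v)" .
    have "q ((1 / norm v) *\<^sub>R v) \<ge> m"
      unfolding m_def using False by (intro min) simp
    then show ?thesis unfolding e by (simp add: mult_left_mono)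
  qed
  have "norm z \<le> norm c + max 1 (1 / m)" if "z \<in> Z" for z
  proof -
    have "norm (z - c) ^ 2 * m \<le> 1" using low[of "z - c"] that Zeq q_def by auto
    then have *: "norm (z - c) ^ 2 \<le> 1 / m" using m by (simp add: field_simps)
    have "norm (z - c) \<le> max 1 (1 / m)"
    proof (cases "norm (z - c) \<le> 1")
      case False
      then have "norm (z - c) \<le> norm (z - c) ^ 2" by (metis (no_types) mult_le_cancel_left1 not_le norm_ge_zero order.strict_trans2 zero_less_one less_imp_le power2_eq_square order_less_imp_le mult_right_mono mult_1_left)
      then show ?thesis using * by linarith
    qed simp
    moreover have "norm z \<le> norm c + norm (z - c)" by (metis add_diff_cancel_left' diff_add_cancel norm_triangle_ineq)
    ultimately show ?thesis by linarith
  qed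
  then show ?thesis unfolding bounded_iff by blast
qed
lemma (in prob_space) mgf_bound:
  fixes Y :: "'n::finite \<Rightarrow> 'a \<Rightarrow> real"
  assumes ind: "indep_vars (\<lambda>_. borel) Y UNIV"
    and bnd: "\<And>k x. x \<in> space M \<Longrightarrow> Y k x \<in> {0..\<rho>}"
    and ex: "\<And>k. expectation (Y k) = \<mu>"
    and l: "l > 0"
  shows "(\<integral>\<^sup>+x. ennreal (exp (\<Sum>k\<in>UNIV. l * (\<mu> - Y k x))) \<partial>M)
     \<le> ennreal (exp (real CARD('n) * (l^2 * \<rho>^2 / 8)))"
proof -
  have rv: "random_variable borel (Y k)" for k using ind unfolding indep_vars_def by blast
  have "(\<integral>\<^sup>+x. ennreal (exp (\<Sum>k\<in>UNIV. l * (\<mu> - Y k x))) \<partial>M)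
      = (\<integral>\<^sup>+x. (\<Prod>k\<in>UNIV. ennreal (exp (l * (\<mu> - Y k x)))) \<partial>M)"
    by (intro nn_integral_cong) (simp add: exp_sum prod_ennreal)
  also have "\<dots> = (\<Prod>k\<in>UNIV. \<integral>\<^sup>+x. ennreal (exp (l * (\<mu> - Y k x))) \<partial>M)"
    by (intro indep_vars_nn_integral indep_vars_compose2[OF ind]) auto
  also have "\<dots> \<le> (\<Prod>k\<in>(UNIV::'n set). ennreal (exp (l^2 * \<rho>^2 / 8)))"
  proof (intro prod_mono_ennreal)
    fix k :: 'n
    interpret B: interval_bounded_random_variable M "\<lambda>x. - Y k x" "-\<rho>" 0
      by unfold_locales (use rv bnd in auto)
    have e: "expectation (\<lambda>x. - Y k x) = - \<mu>" using ex[of k] by simp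
    have "(\<integral>\<^sup>+x. ennreal (exp (l * (- Y k x - expectation (\<lambda>x. - Y k x)))) \<partial>M)
        \<le> ennreal (exp (l\<^sup>2 * (0 - - \<rho>)\<^sup>2 / 8))"
      by (rule B.Hoeffdings_lemma_nn_integral) (rule l)
    then show "(\<integral>\<^sup>+x. ennreal (exp (l * (\<mu> - Y k x))) \<partial>M) \<le> ennreal (exp (l^2 * \<rho>^2 / 8))"
      unfolding e by simp
  qed
  also have "\<dots> = ennreal (exp (real CARD('n) * (l^2 * \<rho>^2 / 8)))"
  proof -
    have "exp (real CARD('n) * (l^2 * \<rho>^2 / 8)) = exp (l^2 * \<rho>^2 / 8) ^ CARD('n)"
      by (rule exp_of_nat_mult)
    then show ?thesis by (simp add: ennreal_power)
  qed
  finally show ?thesis .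
qed

lemma unif_outside:
  fixes U :: "'a \<Rightarrow> real"
  assumes "distributed M lborel U (\<lambda>u. ennreal (indicator {0<..<1} u))"
  shows "emeasure M {\<omega> \<in> space M. U \<omega> \<notin> {0<..<1}} = 0"
proof -
  have meas: "U \<in> measurable M lborel" using assms by (rule distributed_measurable)
  have seq: "{\<omega> \<in> space M. U \<omega> \<notin> {0<..<1}} = U -` (- {0<..<1}) \<inter> space M" by auto
  have "emeasure M {\<omega> \<in> space M. U \<omega> \<notin> {0<..<1}} = emeasure (distr M lborel U) (- {0<..<1})"
  proof -
    have "- {0<..<1::real} \<in> sets lborel" by (simp add: borel_comp borel_open)
    from emeasure_distr[OF meas this] show ?thesis unfolding seq by simp
  qed
  also have "\<dots> = emeasure (density lborel (\<lambda>u. ennreal (indicator {0<..<1} u))) (- {0<..<1::real})"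
    using assms by (simp add: distributed_distr_eq_density)
  also have "\<dots> = (\<integral>\<^sup>+(x::real). ennreal (indicator {0<..<1} x) * indicator (- {0<..<1}) x \<partial>lborel)"
    by (subst emeasure_density) (auto simp: borel_comp borel_open)
  also have "\<dots> = (\<integral>\<^sup>+(x::real). 0 \<partial>lborel)"
    by (intro nn_integral_cong) (simp split: split_indicator)
  finally show ?thesis by simp
qed

lemma unif_le:
  fixes U :: "'a \<Rightarrow> real"
  assumes "distributed M lborel U (\<lambda>u. ennreal (indicator {0<..<1} u))" and "y \<ge> 0"
  shows "emeasure (distr M lborel U) {u. u < y} \<le> ennreal y"
proof -
  have "emeasure (distr M lborel U) {u. u < y}
      = emeasure (density lborel (\<lambda>u. ennreal (indicator {0<..<1} u))) {u. u < y}"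
    using assms by (simp add: distributed_distr_eq_density)
  also have "\<dots> = (\<integral>\<^sup>+(x::real). ennreal (indicator {0<..<1} x) * indicator {u. u < y} x \<partial>lborel)"
    by (subst emeasure_density) (auto simp: borel_comp borel_open)
  also have "\<dots> \<le> (\<integral>\<^sup>+(x::real). indicator {0..y} x \<partial>lborel)"
    by (intro nn_integral_mono) (simp split: split_indicator)
  also have "\<dots> = ennreal y" using assms by simp
  finally show ?thesis .
qed

theorem mainTheorem1:
  fixes M :: "'w measure"
    and f :: "'a::euclidean_space \<Rightarrow> real"
    and X :: "'n::finite \<Rightarrow> 'w \<Rightarrow> 'a"
    and h :: "'a \<Rightarrow> real"
    and U :: "'w \<Rightarrow> real"
    and Z :: "'w \<Rightarrow> (real^'n) set"
    and \<eta> \<rho> \<alpha> \<beta> :: real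
  assumes "prob_space M"
    and "\<eta> > 0"
    and "paley_wiener \<eta> f"
    and "\<And>x. h x > 0"
    and "\<And>k. distributed M lborel (X k) (\<lambda>x. ennreal (h x))"
    and "prob_space.indep_vars M (\<lambda>_. borel) X UNIV"
    and "\<rho> > 0"
    and "\<And>x. (f x)^2 \<le> \<rho> * h x"
    and "0 < \<beta>" and "\<beta> < 1"
    and "\<And>\<omega>. \<omega> \<in> space M \<Longrightarrow> is_ellipsoid (Z \<omega>)"
    and "prob_space.prob M {\<omega> \<in> space M. (\<chi> k. f (X k \<omega>)) \<in> Z \<omega>} \<ge> 1 - \<beta>"
    and "(\<lambda>\<omega>. xi_star (Z \<omega>) h (\<lambda>k. X k \<omega>)) \<in> borel_measurable M"
    and "distributed M lborel U (\<lambda>u. ennreal (indicator {0<..<1} u))"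
    and "\<And>A B. A \<in> sets (Pi\<^sub>M UNIV (\<lambda>_. borel)) \<Longrightarrow> B \<in> sets borel \<Longrightarrow>
           prob_space.prob M {\<omega> \<in> space M. (\<lambda>k. X k \<omega>) \<in> A \<and> U \<omega> \<in> B} =
           prob_space.prob M {\<omega> \<in> space M. (\<lambda>k. X k \<omega>) \<in> A} * prob_space.prob M {\<omega> \<in> space M. U \<omega> \<in> B}"
    and "0 < \<alpha>" and "\<alpha> < 1"
  shows "prob_space.prob M {\<omega> \<in> space M. pw_norm_sq f \<le>
            tau_u (xi_star (Z \<omega>) h (\<lambda>k. X k \<omega>)) \<rho> \<alpha> (real CARD('n)) (U \<omega>)}
           \<ge> 1 - \<alpha> - \<beta> \<and>
         prob_space.prob M {\<omega> \<in> space M.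
            tau_u (xi_star (Z \<omega>) h (\<lambda>k. X k \<omega>)) \<rho> \<alpha> (real CARD('n)) (U \<omega>)
            < tau_0 (xi_star (Z \<omega>) h (\<lambda>k. X k \<omega>)) \<rho> \<alpha> (real CARD('n))} = 1"
proof -
  interpret P: prob_space M by fact
  define n where "n = real CARD('n)"
  have n: "n > 0" unfolding n_def by simp
  define L where "L = ln (1 / \<alpha>)"
  have L: "L > 0" unfolding L_def using assms(16,17) by (simp add: ln_div)
  define \<sigma> where "\<sigma> = \<rho> / 2"
  have \<sigma>: "\<sigma> > 0" using assms(7) unfolding \<sigma>_def by simp
  define \<mu> where "\<mu> = pw_norm_sq f"
  define g where "g x = (f x)^2 / h x" for x
  define lam where "lam = sqrt (2 * n * L) / \<sigma>"
  define c where "c = \<sigma> * sqrt (2 * L / n)"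
  define s where "s = lam / n"
  define \<xi> where "\<xi> \<omega> = xi_star (Z \<omega>) h (\<lambda>k. X k \<omega>)" for \<omega>
  have lam: "lam > 0" unfolding lam_def using n L \<sigma> by simp
  have s: "s > 0" unfolding s_def using lam n by simp
  have sqprod: "sqrt (2 * n * L) * sqrt (2 * L / n) = 2 * L"
  proof -
    have "sqrt (2 * n * L) * sqrt (2 * L / n) = sqrt ((2 * L)^2)"
      using n by (simp add: real_sqrt_mult[symmetric] power2_eq_square field_simps)
    also have "\<dots> = 2 * L" using L by (simp only: real_sqrt_abs)
    finally show ?thesis .
  qed
  have lamc: "lam * c = 2 * L" unfolding lam_def c_def using \<sigma> sqprod by (simp add: field_simps)
  have lamsq: "lam^2 = 2 * n * L / \<sigma>^2"
    unfolding lam_def using n L by (simp add: power_divide)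
  have expo: "n * (s^2 * \<rho>^2 / 8) - lam * c = - L"
  proof -
    have l8: "lam^2 * \<rho>^2 = 8 * n * L" using lamsq \<sigma> unfolding \<sigma>_def by (simp add: field_simps power2_eq_square)
    have "n * (s^2 * \<rho>^2 / 8) = lam^2 * \<rho>^2 / (8 * n)" unfolding s_def using n by (simp add: power_divide field_simps power2_eq_square)
    also have "\<dots> = L" unfolding l8 using n by simp
    finally show ?thesis unfolding lamc by simp
  qed
  have phi_eq: "phi \<sigma> \<alpha> n u = c + ln u / lam" for u
    unfolding phi_def c_def lam_def L_def by (simp add: field_simps)
  have tau0_eq: "tau_0 x \<rho> \<alpha> n = x + c" for x
  proof -
    have "sqrt (L / (2 * n)) = sqrt (2 * L / n) / 2"
    proof -
      have "L / (2 * n) = (2 * L / n) / 4" using n by (simp add: field_simps)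
      moreover have "sqrt (4::real) = 2"
        by (metis abs_numeral power2_eq_square real_sqrt_abs mult_2_right numeral_Bit0)
      ultimately show ?thesis by (simp only: real_sqrt_divide)
    qed
    then show ?thesis unfolding tau_0_def c_def \<sigma>_def L_def by simp
  qed
  have tauu_eq: "tau_u x \<rho> \<alpha> n u = x + c + ln u / lam" for x u
    unfolding tau_u_def \<sigma>_def[symmetric] phi_eq by simp
  have hpos: "\<And>x. h x > 0" by fact
  have Xd: "\<And>k. distributed M lborel (X k) (\<lambda>x. ennreal (h x))" by fact
  have hmeas[measurable]: "h \<in> borel_measurable borel"
  proof -
    have "h \<in> borel_measurable lborel"
      using hpos by (intro distributed_real_measurable[OF _ Xd]) (simp add: less_imp_le)
    then show ?thesis by simp
  qed
  have fmeas[measurable]: "f \<in> borel_measurable borel"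
    using assms(3) unfolding paley_wiener_def by simp
  have gmeas[measurable]: "g \<in> borel_measurable borel" unfolding g_def by measurable
  have Xmeas[measurable]: "X k \<in> measurable M borel" for k
    using distributed_measurable[OF Xd[of k]] by simp
  have Umeas[measurable]: "U \<in> measurable M borel"
    using distributed_measurable[OF assms(14)] by simp
  have \<xi>meas[measurable]: "\<xi> \<in> borel_measurable M" unfolding \<xi>_def by (rule assms(13))
  define N where "N = {\<omega> \<in> space M. U \<omega> \<notin> {0<..<1}}"
  have Nmeas: "N \<in> P.events" unfolding N_def by measurable
  have N0: "P.prob N = 0"
    using unif_outside[OF assms(14)] unfolding N_def by (simp add: P.emeasure_eq_measure)
  have good01: "P.prob (space M - N) = 1" using P.prob_compl[OF Nmeas] N0 by simp
  have part2: "P.prob {\<omega> \<in> space M. tau_u (\<xi> \<omega>) \<rho> \<alpha> n (U \<omega>) < tau_0 (\<xi> \<omega>) \<rho> \<alpha> n} = 1"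
  proof -
    let ?A = "{\<omega> \<in> space M. tau_u (\<xi> \<omega>) \<rho> \<alpha> n (U \<omega>) < tau_0 (\<xi> \<omega>) \<rho> \<alpha> n}"
    have Ameas: "?A \<in> P.events" unfolding tauu_eq tau0_eq by measurable
    have sub: "space M - N \<subseteq> ?A"
    proof
      fix \<omega> assume "\<omega> \<in> space M - N"
      then have "\<omega> \<in> space M" "0 < U \<omega>" "U \<omega> < 1" unfolding N_def by auto
      then have "ln (U \<omega>) < 0" by simp
      then have "ln (U \<omega>) / lam < 0" using lam by (simp add: divide_neg_pos)
      then show "\<omega> \<in> ?A" using \<open>\<omega> \<in> space M\<close> unfolding tauu_eq tau0_eq by simp
    qed
    have "1 \<le> P.prob ?A" using P.finite_measure_mono[OF sub Ameas] good01 by simp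
    then show ?thesis using P.prob_le_1[of ?A] by linarith
  qed
  define G where "G = {\<omega> \<in> space M. (\<chi> k. f (X k \<omega>)) \<in> Z \<omega>}"
  have PG: "P.prob G \<ge> 1 - \<beta>" unfolding G_def by (rule assms(12))
  have Gmeas: "G \<in> P.events"
  proof (rule ccontr)
    assume "G \<notin> P.events"
    then have "P.prob G = 0" by (rule measure_notin_sets)
    then show False using PG assms(10) by simp
  qed
  define ghat where "ghat \<omega> = (1 / real CARD('n)) * (\<Sum>k\<in>UNIV. g (X k \<omega>))" for \<omega>
  have ghat_le: "ghat \<omega> \<le> \<xi> \<omega>" if "\<omega> \<in> G" for \<omega>
  proof -
    have inZ: "(\<chi> k. f (X k \<omega>)) \<in> Z \<omega>" and sp: "\<omega> \<in> space M" using that unfolding G_def by auto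
    have "bounded (Z \<omega>)" by (rule ellipsoid_bounded[OF assms(11)[OF sp]])
    then obtain R where R: "\<And>z. z \<in> Z \<omega> \<Longrightarrow> norm z \<le> R" unfolding bounded_iff by blast
    define F where "F z = (1 / real CARD('n)) * (\<Sum>k\<in>UNIV. (z $ k)^2 / h (X k \<omega>))" for z :: "real^'n"
    have "F z \<le> (1 / real CARD('n)) * (\<Sum>k\<in>UNIV. R^2 / h (X k \<omega>))" if z: "z \<in> Z \<omega>" for z
      unfolding F_def
    proof (intro mult_left_mono sum_mono divide_right_mono)
      fix k
      have "\<bar>z $ k\<bar> \<le> \<bar>R\<bar>" using component_le_norm_cart[of z k] R[OF z] by linarith
      then show "(z $ k)^2 \<le> R^2" by (simp add: abs_le_square_iff)
    qed (use hpos in \<open>auto intro: less_imp_le\<close>)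
    then have bdd: "bdd_above (F ` Z \<omega>)" by (intro bdd_aboveI2) 
    have "F (\<chi> k. f (X k \<omega>)) = ghat \<omega>" unfolding F_def ghat_def g_def by simp
    moreover have "\<xi> \<omega> = Sup (F ` Z \<omega>)" unfolding \<xi>_def xi_star_def F_def by simp
    ultimately show ?thesis using cSup_upper[OF imageI[OF inZ] bdd] by simp
  qed
  define Qf where "Qf x = exp ((\<Sum>k\<in>UNIV. s * (\<mu> - g (x k))) - lam * c)" for x :: "'n \<Rightarrow> 'a"
  define Xv where "Xv \<omega> = (\<lambda>k. X k \<omega>)" for \<omega>
  define E where "E = {\<omega> \<in> space M. U \<omega> < Qf (Xv \<omega>)}"
  have Emeas: "E \<in> P.events" unfolding E_def Qf_def Xv_def by measurable
  define B where "B = {\<omega> \<in> space M. \<mu> \<le> tau_u (\<xi> \<omega>) \<rho> \<alpha> n (U \<omega>)}"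
  have Bmeas: "B \<in> P.events" unfolding B_def tauu_eq by measurable
  have sumeq: "(\<Sum>k\<in>UNIV. s * (\<mu> - g (X k \<omega>))) = lam * (\<mu> - ghat \<omega>)" for \<omega>
  proof -
    have "(\<Sum>k\<in>UNIV. s * (\<mu> - g (X k \<omega>))) = s * (n * \<mu> - (\<Sum>k\<in>UNIV. g (X k \<omega>)))"
      unfolding n_def by (simp add: sum_distrib_left[symmetric] sum_subtractf)
    also have "\<dots> = lam * (\<mu> - ghat \<omega>)"
      unfolding s_def ghat_def n_def[symmetric] using n by (simp add: field_simps)
    finally show ?thesis .
  qed
  have incl: "space M - B \<subseteq> (space M - G) \<union> N \<union> E"
  proof
    fix \<omega> assume w: "\<omega> \<in> space M - B"
    show "\<omega> \<in> (space M - G) \<union> N \<union> E"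
    proof (cases "\<omega> \<in> G \<and> \<omega> \<notin> N")
      case True
      then have sp: "\<omega> \<in> space M" and u: "0 < U \<omega>" "U \<omega> < 1" unfolding G_def N_def by auto
      have "\<mu> > \<xi> \<omega> + c + ln (U \<omega>) / lam" using w unfolding B_def tauu_eq by auto
      then have "ln (U \<omega>) / lam < \<mu> - ghat \<omega> - c" using ghat_le True by force
      then have "ln (U \<omega>) < (\<mu> - ghat \<omega> - c) * lam" using lam by (simp only: pos_divide_less_eq)
      then have "ln (U \<omega>) < lam * (\<mu> - ghat \<omega>) - lam * c" by (simp add: algebra_simps)
      then have "exp (ln (U \<omega>)) < Qf (Xv \<omega>)" unfolding Qf_def Xv_def sumeq by simp
      then have "U \<omega> < Qf (Xv \<omega>)" using u by simp
      then show ?thesis using sp unfolding E_def by simp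
    next
      case False
      then show ?thesis using w by auto
    qed
  qed
  have PE: "P.prob E \<le> \<alpha>"
  proof -
    have Xvmeas[measurable]: "Xv \<in> measurable M (Pi\<^sub>M UNIV (\<lambda>_. borel))"
      unfolding Xv_def by (rule measurable_PiM_single') auto
    have Umeas': "U \<in> measurable M lborel" using Umeas by simp
    have Qfmeas[measurable]: "Qf \<in> borel_measurable (Pi\<^sub>M UNIV (\<lambda>_. borel))" unfolding Qf_def by measurable
    define PX where "PX = distr M (Pi\<^sub>M UNIV (\<lambda>_. borel)) Xv"
    define PU where "PU = distr M lborel U"
    interpret PX: prob_space PX unfolding PX_def by (rule P.prob_space_distr) (rule Xvmeas)
    interpret PU: prob_space PU unfolding PU_def by (rule P.prob_space_distr) (rule Umeas')
    define XU where "XU \<omega> = (Xv \<omega>, U \<omega>)" for \<omega>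
    have XUmeas[measurable]: "XU \<in> measurable M (Pi\<^sub>M UNIV (\<lambda>_. borel) \<Otimes>\<^sub>M lborel)"
      unfolding XU_def using Umeas' by measurable
    have setsPXU: "sets (PX \<Otimes>\<^sub>M PU) = sets (Pi\<^sub>M UNIV (\<lambda>_. borel) \<Otimes>\<^sub>M lborel)"
      by (rule sets_pair_measure_cong) (simp_all add: PX_def PU_def)
    have joint: "PX \<Otimes>\<^sub>M PU = distr M (Pi\<^sub>M UNIV (\<lambda>_. borel) \<Otimes>\<^sub>M lborel) XU"
    proof (rule pair_measure_eqI)
      show "sigma_finite_measure PX" by unfold_locales
      show "sigma_finite_measure PU" by unfold_locales
      show "sets (PX \<Otimes>\<^sub>M PU) = sets (distr M (Pi\<^sub>M UNIV (\<lambda>_. borel) \<Otimes>\<^sub>M lborel) XU)"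
        using setsPXU by simp
    next
      fix A B assume A: "A \<in> sets PX" and B: "B \<in> sets PU"
      then have A': "A \<in> sets (Pi\<^sub>M UNIV (\<lambda>_. borel))" and B': "B \<in> sets borel"
        by (simp_all add: PX_def PU_def)
      have "emeasure PX A = emeasure M (Xv -` A \<inter> space M)"
        unfolding PX_def by (rule emeasure_distr[OF Xvmeas A'])
      also have "Xv -` A \<inter> space M = {\<omega> \<in> space M. (\<lambda>k. X k \<omega>) \<in> A}" unfolding Xv_def by auto
      finally have eA: "emeasure PX A = P.prob {\<omega> \<in> space M. (\<lambda>k. X k \<omega>) \<in> A}"
        by (simp add: P.emeasure_eq_measure)
      have "emeasure PU B = emeasure M (U -` B \<inter> space M)"
        unfolding PU_def using B' by (intro emeasure_distr[OF Umeas']) simp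
      also have "U -` B \<inter> space M = {\<omega> \<in> space M. U \<omega> \<in> B}" by auto
      finally have eB: "emeasure PU B = P.prob {\<omega> \<in> space M. U \<omega> \<in> B}"
        by (simp add: P.emeasure_eq_measure)
      have "emeasure (distr M (Pi\<^sub>M UNIV (\<lambda>_. borel) \<Otimes>\<^sub>M lborel) XU) (A \<times> B) = emeasure M (XU -` (A \<times> B) \<inter> space M)"
        using A' B' by (intro emeasure_distr[OF XUmeas]) simp
      also have "XU -` (A \<times> B) \<inter> space M = {\<omega> \<in> space M. (\<lambda>k. X k \<omega>) \<in> A \<and> U \<omega> \<in> B}"
        unfolding XU_def Xv_def by auto
      finally have eAB: "emeasure (distr M (Pi\<^sub>M UNIV (\<lambda>_. borel) \<Otimes>\<^sub>M lborel) XU) (A \<times> B)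
          = P.prob {\<omega> \<in> space M. (\<lambda>k. X k \<omega>) \<in> A \<and> U \<omega> \<in> B}"
        by (simp add: P.emeasure_eq_measure)
      show "emeasure PX A * emeasure PU B = emeasure (distr M (Pi\<^sub>M UNIV (\<lambda>_. borel) \<Otimes>\<^sub>M lborel) XU) (A \<times> B)"
        unfolding eA eB eAB assms(15)[OF A' B'] by (simp add: ennreal_mult)
    qed
    define T where "T = {p \<in> space (Pi\<^sub>M UNIV (\<lambda>_. borel) \<Otimes>\<^sub>M lborel). snd p < Qf (fst p)}"
    have Tmeas: "T \<in> sets (Pi\<^sub>M UNIV (\<lambda>_. borel) \<Otimes>\<^sub>M lborel)" unfolding T_def by measurable
    have ET: "E = XU -` T \<inter> space M"
      unfolding E_def T_def XU_def using measurable_space[OF XUmeas] by (auto simp: XU_def)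
    have "emeasure M E = emeasure (distr M (Pi\<^sub>M UNIV (\<lambda>_. borel) \<Otimes>\<^sub>M lborel) XU) T"
      unfolding ET by (rule emeasure_distr[OF XUmeas Tmeas, symmetric])
    also have "\<dots> = emeasure (PX \<Otimes>\<^sub>M PU) T" unfolding joint ..
    also have "\<dots> = (\<integral>\<^sup>+x. emeasure PU (Pair x -` T) \<partial>PX)"
      by (rule PU.emeasure_pair_measure_alt) (use Tmeas setsPXU in simp)
    also have "\<dots> \<le> (\<integral>\<^sup>+x. ennreal (Qf x) \<partial>PX)"
    proof (rule nn_integral_mono)
      fix x
      have "emeasure PU (Pair x -` T) \<le> emeasure PU {u. u < Qf x}"
        by (rule emeasure_mono) (auto simp: T_def PU_def)
      also have "\<dots> \<le> ennreal (Qf x)" unfolding PU_def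
        by (rule unif_le[OF assms(14)]) (simp add: Qf_def)
      finally show "emeasure PU (Pair x -` T) \<le> ennreal (Qf x)" .
    qed
    also have "\<dots> = (\<integral>\<^sup>+\<omega>. ennreal (Qf (Xv \<omega>)) \<partial>M)"
      unfolding PX_def by (rule nn_integral_distr[OF Xvmeas]) simp
    also have "\<dots> = (\<integral>\<^sup>+\<omega>. ennreal (exp (- (lam * c))) * ennreal (exp (\<Sum>k\<in>UNIV. s * (\<mu> - g (X k \<omega>)))) \<partial>M)"
      by (intro nn_integral_cong) (simp add: Qf_def Xv_def exp_diff exp_minus ennreal_mult'' field_simps flip: ennreal_mult)
    also have "\<dots> = ennreal (exp (- (lam * c))) * (\<integral>\<^sup>+\<omega>. ennreal (exp (\<Sum>k\<in>UNIV. s * (\<mu> - g (X k \<omega>)))) \<partial>M)"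
      by (rule nn_integral_cmult) measurable
    also have "\<dots> \<le> ennreal (exp (- (lam * c))) * ennreal (exp (real CARD('n) * (s^2 * \<rho>^2 / 8)))"
    proof (intro mult_left_mono)
      show "(\<integral>\<^sup>+\<omega>. ennreal (exp (\<Sum>k\<in>UNIV. s * (\<mu> - g (X k \<omega>)))) \<partial>M)
          \<le> ennreal (exp (real CARD('n) * (s^2 * \<rho>^2 / 8)))"
      proof (rule P.mgf_bound[OF _ _ _ s])
        show "P.indep_vars (\<lambda>_. borel) (\<lambda>k \<omega>. g (X k \<omega>)) UNIV"
          by (rule P.indep_vars_compose2[OF assms(6)]) simp
        fix k x
        have "g y \<ge> 0" for y unfolding g_def using hpos[of y] by simp
        moreover have "g y \<le> \<rho>" for y unfolding g_def using hpos[of y] assms(8)[of y]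
          by (simp add: pos_divide_le_eq)
        ultimately show "g (X k x) \<in> {0..\<rho>}" by simp
      next
        fix k
        have "(\<integral>x. h x * g x \<partial>lborel) = (\<integral>\<omega>. g (X k \<omega>) \<partial>M)"
          by (rule distributed_integral[OF Xd[of k]]) (use hpos in \<open>auto intro: less_imp_le\<close>)
        moreover have "(\<lambda>x. h x * g x) = (\<lambda>x. (f x)^2)"
        proof
          fix x show "h x * g x = (f x)^2" using hpos[of x] by (simp add: g_def)
        qed
        ultimately show "P.expectation (\<lambda>\<omega>. g (X k \<omega>)) = \<mu>" unfolding \<mu>_def pw_norm_sq_def by simp
      qed
    qed simp
    also have "\<dots> = ennreal (exp (n * (s^2 * \<rho>^2 / 8) - lam * c))"
    proof -
      have "exp (- (lam * c)) * exp (real CARD('n) * (s^2 * \<rho>^2 / 8)) = exp (n * (s^2 * \<rho>^2 / 8) - lam * c)"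
        unfolding n_def mult_exp_exp by simp
      then show ?thesis by (simp flip: ennreal_mult)
    qed
    also have "\<dots> = ennreal \<alpha>" unfolding expo L_def using assms(16) by (simp add: ln_div)
    finally show ?thesis using assms(16) by (simp add: P.emeasure_eq_measure)
  qed
  have "P.prob (space M - B) \<le> P.prob ((space M - G) \<union> N \<union> E)"
    by (rule P.finite_measure_mono[OF incl]) (use Gmeas Nmeas Emeas in auto)
  also have "\<dots> \<le> P.prob ((space M - G) \<union> N) + P.prob E"
    by (rule measure_Un_le) (use Gmeas Nmeas Emeas in auto)
  also have "\<dots> \<le> P.prob (space M - G) + P.prob N + P.prob E"
    using measure_Un_le[of "space M - G" M N] Gmeas Nmeas by auto
  also have "P.prob (space M - G) = 1 - P.prob G" by (rule P.prob_compl[OF Gmeas])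
  finally have "P.prob (space M - B) \<le> \<alpha> + \<beta>" using PG PE N0 by linarith
  then have part1: "P.prob B \<ge> 1 - \<alpha> - \<beta>" using P.prob_compl[OF Bmeas] by linarith
  show ?thesis using part1 part2 unfolding B_def \<xi>_def n_def \<mu>_def by simp
qed

end
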